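(* Let $a_1,\dots,a_n\in\mathbb{D}$ be distinct, $n\ge 2$, with $B_l(z)=\prod_{j=1}^l\frac{z-a_j}{1-\bar a_jz}$ and $k_j(z)=\frac1{1-\bar a_jz}$. Let $A$ be a linear operator on $K^2_{B_n}$ with matrix representation $(b^{(n)}_{i,j})_{i,j=1,\dots,n}$ with respect to $\{k_1,\dots,k_n\}$, i.e. $Ak_j=\sum_{m=1}^n b^{(n)}_{m,j}k_m$. Let $P_{n-1}$ be the orthogonal projection of $K^2_{B_n}$ onto $K^2_{B_{n-1}}$. Then $A_{n-1}=P_{n-1}A|_{K^2_{B_{n-1}}}$ has matrix representation $(b^{(n-1)}_{i,j})_{i,j=1,\dots,n-1}$ with respect to $\{k_1,\dots,k_{n-1}\}$ given by $$b^{(n-1)}_{i,j}=b^{(n)}_{i,j}+\frac{\overline{B_{n-1}(a_n)}\,b^{(n)}_{n,j}}{\overline{B_{n-1}'(a_i)}(\bar a_n-\bar a_i)}.$$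
   Context: $K^2_\theta=H^2\ominus\theta H^2$ for inner $\theta$; $\{k_1,\dots,k_l\}$ is a basis of $K^2_{B_l}$ and $K^2_{B_{n-1}}\subset K^2_{B_n}$. *)

theory Defs
  imports "HOL-Analysis.Analysis"
begin

definition kern :: "(nat \<Rightarrow> complex) \<Rightarrow> nat \<Rightarrow> complex \<Rightarrow> complex" where
  "kern a j = (\<lambda>z. 1 / (1 - cnj (a j) * z))"

definition blaschke :: "(nat \<Rightarrow> complex) \<Rightarrow> nat \<Rightarrow> complex \<Rightarrow> complex" where
  "blaschke a l = (\<lambda>z. \<Prod>j=1..l. (z - a j) / (1 - cnj (a j) * z))"

definition taylor_coeff :: "(complex \<Rightarrow> complex) \<Rightarrow> nat \<Rightarrow> complex" where
  "taylor_coeff f m = (deriv ^^ m) f 0 / of_nat (fact m)"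

definition h2_inner :: "(complex \<Rightarrow> complex) \<Rightarrow> (complex \<Rightarrow> complex) \<Rightarrow> complex" where
  "h2_inner f g = (\<Sum>m. taylor_coeff f m * cnj (taylor_coeff g m))"

text \<open>Model space K^2_{B_l}, which (by the standing context) is the linear span of
  k_1, ..., k_l (a basis of it).\<close>
definition model_space :: "(nat \<Rightarrow> complex) \<Rightarrow> nat \<Rightarrow> (complex \<Rightarrow> complex) set" where
  "model_space a l = {f. \<exists>c::nat \<Rightarrow> complex. f = (\<lambda>z. \<Sum>j=1..l. c j * kern a j z)}"

definition orth_proj :: "(complex \<Rightarrow> complex) set \<Rightarrow> (complex \<Rightarrow> complex) \<Rightarrow> (complex \<Rightarrow> complex)" where
  "orth_proj S f = (THE g. g \<in> S \<and> (\<forall>h\<in>S. h2_inner (\<lambda>z. f z - g z) h = 0))"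

end

theory Submission
  imports Defs "HOL-Computational_Algebra.Polynomial"
begin


lemma deriv_pow_inv:
  fixes c z :: complex
  assumes "c * z \<noteq> 1"
  shows "((\<lambda>z. 1/(1 - c*z)^(Suc m)) has_field_derivative
          (of_nat (Suc m) * c / (1 - c*z)^(Suc (Suc m)))) (at z)"
proof -
  have nz: "1 - c*z \<noteq> 0" using assms by auto
  have key: "(0 * w ^ Suc m - 1 * (k * ((0 - (0 * z + 1 * c)) * w ^ (Suc m - Suc 0)))) /
     (w ^ Suc m * w ^ Suc m) = k * c / w ^ Suc (Suc m)" if "w \<noteq> 0" for k w :: complex
  proof -
    have "k * c * w^m / (w^Suc m * w^Suc m) = k * c / w^Suc (Suc m)"
      using that by (simp add: power_Suc field_simps)
    then show ?thesis by (simp add: mult_ac)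
  qed
  show ?thesis
    apply (rule derivative_eq_intros refl)+
    using assms apply simp
    by (rule key[OF nz])
qed

lemma open_U: "finite I \<Longrightarrow> open {z::complex. \<forall>i\<in>I. cnj (a i) * z \<noteq> 1}"
proof -
  assume "finite I"
  have "{z::complex. \<forall>i\<in>I. cnj (a i) * z \<noteq> 1} = (\<Inter>i\<in>I. {z. cnj (a i) * z \<noteq> 1})" by auto
  moreover have "open (\<Inter>i\<in>I. {z::complex. cnj (a i) * z \<noteq> 1})"
    using \<open>finite I\<close> by (intro open_INT ballI open_Collect_neq continuous_intros) auto
  ultimately show ?thesis by simp
qed

lemma hd_comb:
  assumes "finite I"
  shows "\<forall>z\<in>{z. \<forall>i\<in>I. cnj (a i) * z \<noteq> 1}. (deriv^^m) (\<lambda>z. \<Sum>i\<in>I. c i * kern a i z) z =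
     (\<Sum>i\<in>I. c i * fact m * cnj (a i)^m / (1 - cnj (a i) * z)^Suc m)"
proof (induction m)
  case 0
  then show ?case by (simp add: kern_def)
next
  case (Suc m)
  let ?U = "{z. \<forall>i\<in>I. cnj (a i) * z \<noteq> 1}"
  show ?case
  proof
    fix z assume z: "z \<in> ?U"
    have d: "((\<lambda>z. \<Sum>i\<in>I. c i * fact m * cnj (a i)^m / (1 - cnj (a i) * z)^Suc m) has_field_derivative
      (\<Sum>i\<in>I. c i * fact m * cnj (a i)^m * (of_nat (Suc m) * cnj (a i) / (1 - cnj (a i)*z)^(Suc (Suc m))))) (at z)"
    proof (rule DERIV_sum)
      fix i assume "i \<in> I"
      then have "cnj (a i) * z \<noteq> 1" using z by auto
      from DERIV_cmult[OF deriv_pow_inv[OF this, of m], of "c i * fact m * cnj (a i)^m"]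
      show "((\<lambda>z. c i * fact m * cnj (a i)^m / (1 - cnj (a i) * z)^Suc m) has_field_derivative
        c i * fact m * cnj (a i)^m * (of_nat (Suc m) * cnj (a i) / (1 - cnj (a i)*z)^(Suc (Suc m)))) (at z)"
        by simp
    qed
    have d2: "((deriv^^m) (\<lambda>z. \<Sum>i\<in>I. c i * kern a i z) has_field_derivative
      (\<Sum>i\<in>I. c i * fact m * cnj (a i)^m * (of_nat (Suc m) * cnj (a i) / (1 - cnj (a i)*z)^(Suc (Suc m))))) (at z)"
      by (rule has_field_derivative_transform_within_open[OF d open_U[OF assms] z]) (use Suc.IH in auto)
    have "(deriv^^Suc m) (\<lambda>z. \<Sum>i\<in>I. c i * kern a i z) z =
      (\<Sum>i\<in>I. c i * fact m * cnj (a i)^m * (of_nat (Suc m) * cnj (a i) / (1 - cnj (a i)*z)^(Suc (Suc m))))"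
      using DERIV_imp_deriv[OF d2] by simp
    also have "\<dots> = (\<Sum>i\<in>I. c i * fact (Suc m) * cnj (a i)^Suc m / (1 - cnj (a i) * z)^Suc (Suc m))"
      by (rule sum.cong) (simp_all add: field_simps)
    finally show "(deriv^^Suc m) (\<lambda>z. \<Sum>i\<in>I. c i * kern a i z) z =
      (\<Sum>i\<in>I. c i * fact (Suc m) * cnj (a i)^Suc m / (1 - cnj (a i) * z)^Suc (Suc m))" .
  qed
qed

lemma taylor_comb:
  assumes "finite I"
  shows "taylor_coeff (\<lambda>z. \<Sum>i\<in>I. c i * kern a i z) m = (\<Sum>i\<in>I. c i * cnj (a i)^m)"
proof -
  have "(deriv^^m) (\<lambda>z. \<Sum>i\<in>I. c i * kern a i z) 0 = (\<Sum>i\<in>I. c i * fact m * cnj (a i)^m)"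
    using hd_comb[OF assms, where m=m and a=a and c=c] by simp
  then show ?thesis unfolding taylor_coeff_def
    by (simp add: sum_divide_distrib)
qed


lemma inner_sums:
  assumes I: "finite I" and L: "finite L"
    and aI: "\<And>i. i \<in> I \<Longrightarrow> norm (a i) < 1" and aL: "\<And>l. l \<in> L \<Longrightarrow> norm (a l) < 1"
  shows "(\<lambda>m. taylor_coeff (\<lambda>z. \<Sum>i\<in>I. c i * kern a i z) m * cnj (taylor_coeff (\<lambda>z. \<Sum>l\<in>L. d l * kern a l z) m))
     sums (\<Sum>i\<in>I. \<Sum>l\<in>L. c i * cnj (d l) / (1 - cnj (a i) * a l))"
proof -
  have eq: "taylor_coeff (\<lambda>z. \<Sum>i\<in>I. c i * kern a i z) m * cnj (taylor_coeff (\<lambda>z. \<Sum>l\<in>L. d l * kern a l z) m)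
     = (\<Sum>i\<in>I. \<Sum>l\<in>L. c i * cnj (d l) * (cnj (a i) * a l)^m)" for m
    unfolding taylor_comb[OF I] taylor_comb[OF L]
    by (simp add: sum_product power_mult_distrib mult_ac)
  have "(\<lambda>m. \<Sum>i\<in>I. \<Sum>l\<in>L. c i * cnj (d l) * (cnj (a i) * a l)^m) sums
      (\<Sum>i\<in>I. \<Sum>l\<in>L. c i * cnj (d l) / (1 - cnj (a i) * a l))"
  proof (intro sums_sum)
    fix i l assume i: "i \<in> I" and l: "l \<in> L"
    have "norm (cnj (a i) * a l) < 1"
    proof -
      have "norm (cnj (a i) * a l) = norm (a i) * norm (a l)" by (simp add: norm_mult)
      also have "\<dots> < 1" using aI[OF i] aL[OF l]
        by (metis mult_less_cancel_right1 norm_ge_zero mult_le_cancel_left1 less_le_not_le order_le_less_trans not_le mult_le_one less_imp_le)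
      finally show ?thesis .
    qed
    from sums_mult[OF geometric_sums[OF this], of "c i * cnj (d l)"]
    show "(\<lambda>m. c i * cnj (d l) * (cnj (a i) * a l)^m) sums (c i * cnj (d l) / (1 - cnj (a i) * a l))"
      by simp
  qed
  then show ?thesis unfolding eq .
qed

lemma inner_comb:
  assumes "finite I" "finite L"
    "\<And>i. i \<in> I \<Longrightarrow> norm (a i) < 1" "\<And>l. l \<in> L \<Longrightarrow> norm (a l) < 1"
  shows "h2_inner (\<lambda>z. \<Sum>i\<in>I. c i * kern a i z) (\<lambda>z. \<Sum>l\<in>L. d l * kern a l z)
     = (\<Sum>i\<in>I. \<Sum>l\<in>L. c i * cnj (d l) / (1 - cnj (a i) * a l))"
  unfolding h2_inner_def using sums_unique[OF inner_sums[OF assms]] by simp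



lemma vandermonde_zero:
  fixes x d :: "nat \<Rightarrow> complex"
  assumes J: "finite J" and inj: "inj_on x J" and z: "\<And>m. (\<Sum>i\<in>J. d i * x i ^ m) = 0" and i0: "i0 \<in> J"
  shows "d i0 = 0"
proof -
  define p where "p = (\<Prod>j\<in>J-{i0}. [:- x j, 1:])"
  have pp: "poly p y = (\<Prod>j\<in>J-{i0}. y - x j)" for y
    unfolding p_def by (simp add: poly_prod)
  have "(\<Sum>i\<in>J. d i * poly p (x i)) = (\<Sum>i\<in>J. \<Sum>k\<le>degree p. coeff p k * (d i * x i ^ k))"
    by (simp add: poly_altdef sum_distrib_left mult_ac)
  also have "\<dots> = (\<Sum>k\<le>degree p. coeff p k * (\<Sum>i\<in>J. d i * x i ^ k))"
    by (subst sum.swap) (simp add: sum_distrib_left)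
  also have "\<dots> = 0" using z by simp
  finally have s0: "(\<Sum>i\<in>J. d i * poly p (x i)) = 0" .
  have "(\<Sum>i\<in>J. d i * poly p (x i)) = d i0 * poly p (x i0) + (\<Sum>i\<in>J-{i0}. d i * poly p (x i))"
    using J i0 by (simp add: sum.remove)
  also have "(\<Sum>i\<in>J-{i0}. d i * poly p (x i)) = 0"
  proof (rule sum.neutral, rule ballI)
    fix i assume "i \<in> J - {i0}"
    then show "d i * poly p (x i) = 0" unfolding pp using J
      by (auto simp: prod_zero_iff)
  qed
  finally have "d i0 * poly p (x i0) = 0" using s0 by simp
  moreover have "poly p (x i0) \<noteq> 0" unfolding pp using J inj i0
    by (subst prod_zero_iff) (auto simp: inj_on_def)
  ultimately show ?thesis by simp
qed

lemma lagrange: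
  fixes x :: "nat \<Rightarrow> complex" and q :: "complex poly"
  assumes J: "finite J" and inj: "inj_on x J" and y: "y \<notin> x ` J" and dq: "degree q < card J"
  shows "(\<Sum>i\<in>J. poly q (x i) / ((\<Prod>j\<in>J-{i}. x i - x j) * (y - x i))) = poly q y / (\<Prod>j\<in>J. y - x j)"
proof -
  define N where "N i = (\<Prod>j\<in>J-{i}. [:- x j, 1:])" for i
  define c where "c i = poly q (x i) / (\<Prod>j\<in>J-{i}. x i - x j)" for i
  define P where "P = q - (\<Sum>i\<in>J. smult (c i) (N i))"
  have pN: "poly (N i) w = (\<Prod>j\<in>J-{i}. w - x j)" for i w
    unfolding N_def by (simp add: poly_prod)
  have degN: "degree (N i) \<le> card J - 1" if "i \<in> J" for i
  proof -
    have "degree (N i) \<le> sum (degree \<circ> (\<lambda>j. [:- x j, 1:])) (J-{i})"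
      unfolding N_def by (rule degree_prod_sum_le) (use J in simp)
    also have "\<dots> = card (J - {i})" by simp
    finally show ?thesis using that J by simp
  qed
  have degP: "degree P < card J"
  proof -
    have "degree (\<Sum>i\<in>J. smult (c i) (N i)) \<le> card J - 1"
      by (rule degree_sum_le[OF J]) (meson degN degree_smult_le order_trans)
    moreover have "card J > 0" using dq by simp
    moreover have "degree P \<le> max (degree q) (degree (\<Sum>i\<in>J. smult (c i) (N i)))"
      unfolding P_def by (rule degree_diff_le) simp_all
    ultimately show ?thesis using dq by linarith
  qed
  have nz: "(\<Prod>j\<in>J-{i}. x i - x j) \<noteq> 0" if "i \<in> J" for i
    using J inj that by (subst prod_zero_iff) (auto simp: inj_on_def)
  have root: "poly P (x k) = 0" if k: "k \<in> J" for k
  proof -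
    have "(\<Sum>i\<in>J. c i * poly (N i) (x k)) = c k * poly (N k) (x k) + (\<Sum>i\<in>J-{k}. c i * poly (N i) (x k))"
      using J k by (simp add: sum.remove)
    also have "(\<Sum>i\<in>J-{k}. c i * poly (N i) (x k)) = 0"
    proof (rule sum.neutral, rule ballI)
      fix i assume "i \<in> J - {k}"
      then show "c i * poly (N i) (x k) = 0" unfolding pN using J k
        by (auto simp: prod_zero_iff)
    qed
    also have "c k * poly (N k) (x k) = poly q (x k)"
      unfolding c_def pN using nz[OF k] by simp
    finally show ?thesis unfolding P_def by (simp add: poly_sum)
  qed
  have P0: "P = 0"
  proof (rule ccontr)
    assume "P \<noteq> 0"
    then have "card {w. poly P w = 0} \<le> degree P" by (rule card_poly_roots_bound)
    moreover have "card (x ` J) \<le> card {w. poly P w = 0}"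
      using root \<open>P \<noteq> 0\<close> by (intro card_mono poly_roots_finite) auto
    moreover have "card (x ` J) = card J" using card_image[OF inj] .
    ultimately show False using degP by simp
  qed
  have qy: "poly q y = (\<Sum>i\<in>J. c i * (\<Prod>j\<in>J-{i}. y - x j))"
    using arg_cong[OF P0, of "\<lambda>p. poly p y"] unfolding P_def by (simp add: poly_sum pN)
  have Ny: "(\<Prod>j\<in>J. y - x j) = (y - x i) * (\<Prod>j\<in>J-{i}. y - x j)" if "i \<in> J" for i
    using J that by (simp add: prod.remove)
  have ynz: "y - x i \<noteq> 0" if "i \<in> J" for i using y that by auto
  have Nynz: "(\<Prod>j\<in>J-{i}. y - x j) \<noteq> 0" if "i \<in> J" for i
    using J y by (subst prod_zero_iff) auto
  have "poly q y / (\<Prod>j\<in>J. y - x j) = (\<Sum>i\<in>J. c i * (\<Prod>j\<in>J-{i}. y - x j) / (\<Prod>j\<in>J. y - x j))"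
    unfolding qy by (simp add: sum_divide_distrib)
  also have "\<dots> = (\<Sum>i\<in>J. poly q (x i) / ((\<Prod>j\<in>J-{i}. x i - x j) * (y - x i)))"
  proof (rule sum.cong[OF refl])
    fix i assume i: "i \<in> J"
    show "c i * (\<Prod>j\<in>J-{i}. y - x j) / (\<Prod>j\<in>J. y - x j) = poly q (x i) / ((\<Prod>j\<in>J-{i}. x i - x j) * (y - x i))"
      unfolding Ny[OF i] c_def using Nynz[OF i] ynz[OF i] nz[OF i] by (simp add: field_simps)
  qed
  finally show ?thesis by simp
qed



lemma blaschke_deriv:
  fixes a :: "nat \<Rightarrow> complex"
  assumes J: "finite J" and i: "i \<in> J" and nz: "\<And>j. j \<in> J \<Longrightarrow> cnj (a j) * a i \<noteq> 1"
  shows "deriv (\<lambda>z. \<Prod>j\<in>J. (z - a j) / (1 - cnj (a j) * z)) (a i) =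
    (1 / (1 - cnj (a i) * a i)) * (\<Prod>j\<in>J-{i}. (a i - a j) / (1 - cnj (a j) * a i))"
proof -
  define f' where "f' x = (1 - cnj (a x) * a x) / (1 - cnj (a x) * a i)^2" for x
  have d1: "((\<lambda>z. (z - a x) / (1 - cnj (a x) * z)) has_field_derivative f' x) (at (a i))" if x: "x \<in> J" for x
  proof -
    have w: "1 - cnj (a x) * a i \<noteq> 0" using nz[OF x] by auto
    show ?thesis
      apply (rule derivative_eq_intros refl)+
      using w apply simp
      using w unfolding f'_def by (simp add: field_simps power2_eq_square)
  qed
  have D: "((\<lambda>z. \<Prod>j\<in>J. (z - a j) / (1 - cnj (a j) * z)) has_field_derivative
      (\<Sum>x\<in>J. f' x * (\<Prod>y\<in>J-{x}. (a i - a y) / (1 - cnj (a y) * a i)))) (at (a i))"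
    by (rule has_field_derivative_prod) (rule d1)
  have "(\<Sum>x\<in>J. f' x * (\<Prod>y\<in>J-{x}. (a i - a y) / (1 - cnj (a y) * a i))) =
     f' i * (\<Prod>y\<in>J-{i}. (a i - a y) / (1 - cnj (a y) * a i)) +
     (\<Sum>x\<in>J-{i}. f' x * (\<Prod>y\<in>J-{x}. (a i - a y) / (1 - cnj (a y) * a i)))"
    using J i by (simp add: sum.remove)
  also have "(\<Sum>x\<in>J-{i}. f' x * (\<Prod>y\<in>J-{x}. (a i - a y) / (1 - cnj (a y) * a i))) = 0"
  proof (rule sum.neutral, rule ballI)
    fix x assume "x \<in> J - {i}"
    then have "(\<Prod>y\<in>J-{x}. (a i - a y) / (1 - cnj (a y) * a i)) = 0"
      using J i by (auto simp: prod_zero_iff)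
    then show "f' x * (\<Prod>y\<in>J-{x}. (a i - a y) / (1 - cnj (a y) * a i)) = 0" by simp
  qed
  also have "f' i = 1 / (1 - cnj (a i) * a i)"
  proof -
    have w: "1 - cnj (a i) * a i \<noteq> 0" using nz[OF i] by auto
    then show ?thesis unfolding f'_def by (simp add: power2_eq_square)
  qed
  finally show ?thesis using DERIV_imp_deriv[OF D] by simp
qed



lemma key_abstract:
  fixes x u :: "nat \<Rightarrow> complex" and y :: complex
  assumes J: "finite J" and inj: "inj_on x J" and y: "y \<notin> x ` J" and l: "l \<in> J"
    and ux: "\<And>i j. i \<in> J \<Longrightarrow> j \<in> J \<Longrightarrow> u j * x i \<noteq> 1" and uy: "\<And>j. j \<in> J \<Longrightarrow> u j * y \<noteq> 1"
  shows "(\<Sum>i\<in>J. ((\<Prod>j\<in>J. (y - x j) / (1 - u j * y)) /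
             ((1 / (1 - u i * x i)) * (\<Prod>j\<in>J-{i}. (x i - x j) / (1 - u j * x i)) * (y - x i)))
           / (1 - x i * u l)) = 1 / (1 - y * u l)"
proof -
  define q where "q = (\<Prod>j\<in>J-{l}. [:1, - u j:])"
  have pq: "poly q w = (\<Prod>j\<in>J-{l}. 1 - u j * w)" for w
    unfolding q_def by (simp add: poly_prod mult_ac)
  have card: "card J > 0" using J l by (auto simp: card_gt_0_iff)
  have dq: "degree q < card J"
  proof -
    have "degree q \<le> sum (degree \<circ> (\<lambda>j. [:1, - u j:])) (J-{l})"
      unfolding q_def by (rule degree_prod_sum_le) (use J in simp)
    also have "\<dots> \<le> sum (\<lambda>_. 1) (J-{l})" by (rule sum_mono) simp
    also have "\<dots> = card J - 1" using J l by simp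
    finally show ?thesis using card by linarith
  qed
  define D where "D w = (\<Prod>j\<in>J. 1 - u j * w)" for w
  define N where "N = (\<Prod>j\<in>J. y - x j)"
  define Ni where "Ni i = (\<Prod>j\<in>J-{i}. x i - x j)" for i
  have Dl: "D w = (1 - u l * w) * poly q w" for w
    unfolding D_def pq using J l by (simp add: prod.remove)
  have Di: "D (x i) = (1 - u i * x i) * (\<Prod>j\<in>J-{i}. 1 - u j * x i)" if "i \<in> J" for i
    unfolding D_def using J that by (simp add: prod.remove)
  have Dxnz: "D (x i) \<noteq> 0" if "i \<in> J" for i
    unfolding D_def using J ux[OF that] by (auto simp: prod_zero_iff)
  have Dynz: "D y \<noteq> 0"
    unfolding D_def using J uy by (auto simp: prod_zero_iff)
  have Nnz: "N \<noteq> 0" unfolding N_def using J y by (auto simp: prod_zero_iff)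
  have Ninz: "Ni i \<noteq> 0" if "i \<in> J" for i
    unfolding Ni_def using J inj that by (auto simp: prod_zero_iff inj_on_def)
  have ynz: "y - x i \<noteq> 0" if "i \<in> J" for i using y that by auto
  have qynz: "poly q y \<noteq> 0" using Dynz Dl by auto
  have ulnz: "1 - u l * y \<noteq> 0" using uy[OF l] by auto
  have lag: "(\<Sum>i\<in>J. poly q (x i) / (Ni i * (y - x i))) = poly q y / N"
    unfolding Ni_def N_def by (rule lagrange[OF J inj y dq])
  have "(\<Sum>i\<in>J. ((\<Prod>j\<in>J. (y - x j) / (1 - u j * y)) /
             ((1 / (1 - u i * x i)) * (\<Prod>j\<in>J-{i}. (x i - x j) / (1 - u j * x i)) * (y - x i)))
           / (1 - x i * u l)) = (\<Sum>i\<in>J. N / D y * (poly q (x i) / (Ni i * (y - x i))))"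
  proof (rule sum.cong[OF refl])
    fix i assume i: "i \<in> J"
    have e1: "(\<Prod>j\<in>J. (y - x j) / (1 - u j * y)) = N / D y"
      unfolding N_def D_def by (simp add: prod_dividef)
    have e2: "(1 / (1 - u i * x i)) * (\<Prod>j\<in>J-{i}. (x i - x j) / (1 - u j * x i)) = Ni i / D (x i)"
      unfolding Di[OF i] Ni_def by (simp add: prod_dividef)
    have e3: "D (x i) = (1 - x i * u l) * poly q (x i)" using Dl[of "x i"] by (simp add: mult.commute)
    show "((\<Prod>j\<in>J. (y - x j) / (1 - u j * y)) /
             ((1 / (1 - u i * x i)) * (\<Prod>j\<in>J-{i}. (x i - x j) / (1 - u j * x i)) * (y - x i)))
           / (1 - x i * u l) = N / D y * (poly q (x i) / (Ni i * (y - x i)))"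
    proof -
      have "1 - x i * u l \<noteq> 0" "poly q (x i) \<noteq> 0" using Dxnz[OF i] e3 by auto
      moreover have alg: "(NN / Dy) / ((M / (w * p)) * e) / w = NN / Dy * (p / (M * e))"
        if "w \<noteq> 0" "p \<noteq> 0" "M \<noteq> 0" "e \<noteq> 0" "Dy \<noteq> 0" for NN Dy M w p e :: complex
        using that by (simp add: field_simps)
      ultimately show ?thesis unfolding e1 e2 e3 using Ninz[OF i] ynz[OF i] Dynz
        by (intro alg) auto
    qed
  qed
  also have "\<dots> = N / D y * (poly q y / N)" by (simp only: sum_distrib_left[symmetric] lag)
  also have "\<dots> = 1 / (1 - y * u l)" unfolding Dl using Nnz qynz ulnz by (simp add: field_simps)
  finally show ?thesis .
qed



lemma norm_prod_ne1:
  fixes p q :: complex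
  assumes "norm p < 1" "norm q < 1"
  shows "p * q \<noteq> 1"
proof
  assume "p * q = 1"
  then have "norm p * norm q = 1" by (metis norm_mult norm_one)
  moreover have "norm p * norm q < 1" using assms
    by (metis mult_less_cancel_right1 norm_ge_zero mult_le_cancel_left1 less_le_not_le order_le_less_trans not_le mult_le_one less_imp_le)
  ultimately show False by simp
qed

lemma dbl_swap:
  assumes "finite I" "finite L"
  shows "(\<Sum>i\<in>I. \<Sum>l\<in>L. e i * cnj (dh l) / (1 - cnj (a i) * a l)) =
     (\<Sum>l\<in>L. cnj (dh l) * (\<Sum>i\<in>I. e i / (1 - cnj (a i) * a l)))"
  by (subst sum.swap) (simp add: sum_distrib_left mult_ac)

theorem lemma4p5:
  fixes a :: "nat \<Rightarrow> complex" and n :: nat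
    and A :: "(complex \<Rightarrow> complex) \<Rightarrow> (complex \<Rightarrow> complex)"
    and b :: "nat \<Rightarrow> nat \<Rightarrow> complex"
  assumes n2: "n \<ge> 2"
    and disc: "\<And>j. j \<in> {1..n} \<Longrightarrow> norm (a j) < 1"
    and dist: "inj_on a {1..n}"
    and A_lin: "\<And>f g c. f \<in> model_space a n \<Longrightarrow> g \<in> model_space a n \<Longrightarrow>
                  A (\<lambda>z. f z + c * g z) = (\<lambda>z. A f z + c * A g z)"
    and A_mat: "\<And>j. j \<in> {1..n} \<Longrightarrow>
                  A (kern a j) = (\<lambda>z. \<Sum>m=1..n. b m j * kern a m z)"
  shows "\<forall>j\<in>{1..n-1}.
           orth_proj (model_space a (n-1)) (A (kern a j)) =
           (\<lambda>z. \<Sum>i=1..n-1.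
                 (b i j + cnj (blaschke a (n-1) (a n)) * b n j /
                   (cnj (deriv (blaschke a (n-1)) (a i)) * (cnj (a n) - cnj (a i))))
                 * kern a i z)"
proof
  fix j assume j: "j \<in> {1..n-1}"
  define J where "J = {1..n-1}"
  have finJ: "finite J" unfolding J_def by simp
  have Un: "{1..n} = insert n J" unfolding J_def using n2 by auto
  have nJ: "n \<notin> J" unfolding J_def using n2 by auto
  have JS: "J \<subseteq> {1..n}" unfolding J_def by auto
  have nN: "n \<in> {1..n}" using n2 by auto
  have discJ: "\<And>i. i \<in> J \<Longrightarrow> norm (a i) < 1" using disc JS by auto
  have discN: "\<And>i. i \<in> {1..n} \<Longrightarrow> norm (a i) < 1" using disc by auto
  have jN: "j \<in> {1..n}" using j by auto
  define c where "c i = cnj (blaschke a (n-1) (a n)) /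
     (cnj (deriv (blaschke a (n-1)) (a i)) * (cnj (a n) - cnj (a i)))" for i
  define \<gamma> where "\<gamma> i = b i j + cnj (blaschke a (n-1) (a n)) * b n j /
                   (cnj (deriv (blaschke a (n-1)) (a i)) * (cnj (a n) - cnj (a i)))" for i
  have \<gamma>c: "\<gamma> i = b i j + c i * b n j" for i
    unfolding \<gamma>_def c_def by simp
  have K: "(\<Sum>i\<in>J. c i / (1 - cnj (a i) * a l)) = 1 / (1 - cnj (a n) * a l)" if l: "l \<in> J" for l
  proof -
    have inj: "inj_on (\<lambda>i. cnj (a i)) J"
      using dist JS by (auto simp: inj_on_def)
    have y: "cnj (a n) \<notin> (\<lambda>i. cnj (a i)) ` J"
    proof
      assume "cnj (a n) \<in> (\<lambda>i. cnj (a i)) ` J"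
      then obtain i where i: "i \<in> J" "a n = a i" by auto
      then have "n = i" using inj_onD[OF dist, of n i] JS nN by auto
      then show False using i nJ by simp
    qed
    have ux: "a j' * cnj (a i) \<noteq> 1" if "i \<in> J" "j' \<in> J" for i j'
      using that discJ by (intro norm_prod_ne1) auto
    have uy: "a j' * cnj (a n) \<noteq> 1" if "j' \<in> J" for j'
      using that discJ discN[OF nN] by (intro norm_prod_ne1) auto
    have ka: "(\<Sum>i\<in>J. ((\<Prod>j\<in>J. (cnj (a n) - cnj (a j)) / (1 - a j * cnj (a n))) /
             ((1 / (1 - a i * cnj (a i))) * (\<Prod>j\<in>J-{i}. (cnj (a i) - cnj (a j)) / (1 - a j * cnj (a i))) * (cnj (a n) - cnj (a i))))
           / (1 - cnj (a i) * a l)) = 1 / (1 - cnj (a n) * a l)"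
      by (rule key_abstract[where x="\<lambda>i. cnj (a i)" and u=a, OF finJ inj y l ux uy])
    have cc: "c i = (\<Prod>j\<in>J. (cnj (a n) - cnj (a j)) / (1 - a j * cnj (a n))) /
             ((1 / (1 - a i * cnj (a i))) * (\<Prod>j\<in>J-{i}. (cnj (a i) - cnj (a j)) / (1 - a j * cnj (a i))) * (cnj (a n) - cnj (a i)))"
      if i: "i \<in> J" for i
    proof -
      have bd: "deriv (blaschke a (n-1)) (a i) =
          (1 / (1 - cnj (a i) * a i)) * (\<Prod>j\<in>J-{i}. (a i - a j) / (1 - cnj (a j) * a i))"
        unfolding blaschke_def J_def[symmetric]
        by (rule blaschke_deriv[OF finJ i]) (rule norm_prod_ne1, use i discJ in auto)
      show ?thesis unfolding c_def bd unfolding blaschke_def J_def[symmetric]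
        by (simp add: mult.commute)
    qed
    show ?thesis using ka cc by simp
  qed

  have AF: "A (kern a j) = (\<lambda>z. \<Sum>m\<in>{1..n}. b m j * kern a m z)" using A_mat[OF jN] by simp
  define Phi where "Phi e l = (\<Sum>i\<in>{1..n}. e i / (1 - cnj (a i) * a l))" for e :: "nat \<Rightarrow> complex" and l
  define ed where "ed d m = b m j - (if m \<in> J then d m else 0)" for d :: "nat \<Rightarrow> complex" and m
  have diff: "(\<lambda>z. A (kern a j) z - (\<Sum>i\<in>J. d i * kern a i z)) = (\<lambda>z. \<Sum>m\<in>{1..n}. ed d m * kern a m z)" for d
  proof
    fix z
    have "(\<Sum>m\<in>{1..n}. ed d m * kern a m z) = (\<Sum>m\<in>{1..n}. b m j * kern a m z) - (\<Sum>m\<in>{1..n}. (if m \<in> J then d m else 0) * kern a m z)"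
      unfolding ed_def by (simp add: sum_subtractf algebra_simps)
    also have "(\<Sum>m\<in>{1..n}. (if m \<in> J then d m else 0) * kern a m z) = (\<Sum>i\<in>J. d i * kern a i z)"
      unfolding Un using finJ nJ by (simp add: sum.insert)
    finally show "A (kern a j) z - (\<Sum>i\<in>J. d i * kern a i z) = (\<Sum>m\<in>{1..n}. ed d m * kern a m z)"
      unfolding AF by simp
  qed
  have inner: "h2_inner (\<lambda>z. \<Sum>m\<in>{1..n}. e m * kern a m z) (\<lambda>z. \<Sum>l\<in>J. dh l * kern a l z) =
      (\<Sum>l\<in>J. cnj (dh l) * Phi e l)" for e dh
    unfolding Phi_def
    by (subst inner_comb) (auto simp: finJ discN discJ intro!: dbl_swap)
  have Phi_split: "Phi e l = (\<Sum>i\<in>J. e i / (1 - cnj (a i) * a l)) + e n / (1 - cnj (a n) * a l)" for e l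
    unfolding Phi_def Un using finJ nJ by (simp add: sum.insert)
  have orth\<gamma>: "Phi (ed \<gamma>) l = 0" if l: "l \<in> J" for l
  proof -
    have "(\<Sum>i\<in>J. ed \<gamma> i / (1 - cnj (a i) * a l)) = (\<Sum>i\<in>J. - b n j * (c i / (1 - cnj (a i) * a l)))"
      by (rule sum.cong) (auto simp: ed_def \<gamma>c)
    also have "\<dots> = - b n j * (1 / (1 - cnj (a n) * a l))"
      by (simp only: sum_distrib_left[symmetric] K[OF l])
    finally show ?thesis unfolding Phi_split using nJ by (simp add: ed_def)
  qed
  have memS: "(\<lambda>z. \<Sum>i\<in>J. d i * kern a i z) \<in> model_space a (n-1)" for d
    unfolding model_space_def J_def by auto
  have Sform: "h \<in> model_space a (n-1) \<Longrightarrow> \<exists>d. h = (\<lambda>z. \<Sum>i\<in>J. d i * kern a i z)" for h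
    unfolding model_space_def J_def by auto
  have orthd: "(\<forall>h\<in>model_space a (n-1). h2_inner (\<lambda>z. A (kern a j) z - (\<Sum>i\<in>J. d i * kern a i z)) h = 0)
      \<longleftrightarrow> (\<forall>l\<in>J. Phi (ed d) l = 0)" for d
  proof
    assume H: "\<forall>h\<in>model_space a (n-1). h2_inner (\<lambda>z. A (kern a j) z - (\<Sum>i\<in>J. d i * kern a i z)) h = 0"
    show "\<forall>l\<in>J. Phi (ed d) l = 0"
    proof
      fix l assume l: "l \<in> J"
      have "0 = h2_inner (\<lambda>z. A (kern a j) z - (\<Sum>i\<in>J. d i * kern a i z)) (\<lambda>z. \<Sum>i\<in>J. (if i = l then 1 else 0) * kern a i z)"
        using H memS by auto
      also have "\<dots> = (\<Sum>i\<in>J. cnj (if i = l then 1 else 0) * Phi (ed d) i)"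
        unfolding diff inner ..
      also have "\<dots> = (\<Sum>i\<in>J. if l = i then Phi (ed d) i else 0)"
        by (rule sum.cong) auto
      also have "\<dots> = Phi (ed d) l" using finJ l by (simp add: sum.delta)
      finally show "Phi (ed d) l = 0" by simp
    qed
  next
    assume H: "\<forall>l\<in>J. Phi (ed d) l = 0"
    show "\<forall>h\<in>model_space a (n-1). h2_inner (\<lambda>z. A (kern a j) z - (\<Sum>i\<in>J. d i * kern a i z)) h = 0"
    proof
      fix h assume "h \<in> model_space a (n-1)"
      then obtain dh where h: "h = (\<lambda>z. \<Sum>i\<in>J. dh i * kern a i z)" using Sform by blast
      show "h2_inner (\<lambda>z. A (kern a j) z - (\<Sum>i\<in>J. d i * kern a i z)) h = 0"
        unfolding h diff inner using H by simp
    qed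
  qed
  have uniq: "d i = \<gamma> i" if Hd: "\<forall>l\<in>J. Phi (ed d) l = 0" and i: "i \<in> J" for d i
  proof -
    define \<delta> where "\<delta> i = \<gamma> i - d i" for i
    have z: "(\<Sum>i\<in>J. \<delta> i / (1 - cnj (a i) * a l)) = 0" if l: "l \<in> J" for l
    proof -
      have "Phi (ed d) l - Phi (ed \<gamma>) l = (\<Sum>i\<in>J. \<delta> i / (1 - cnj (a i) * a l))"
        unfolding Phi_split using nJ
        by (simp add: ed_def \<delta>_def sum_subtractf[symmetric] diff_divide_distrib[symmetric] cong: sum.cong)
      then show ?thesis using Hd orth\<gamma>[OF l] l by simp
    qed
    define t where "t m = taylor_coeff (\<lambda>z. \<Sum>i\<in>J. \<delta> i * kern a i z) m" for m
    have ts: "(\<lambda>m. t m * cnj (t m)) sums 0"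
    proof -
      have "(\<lambda>m. t m * cnj (t m)) sums (\<Sum>i\<in>J. \<Sum>l\<in>J. \<delta> i * cnj (\<delta> l) / (1 - cnj (a i) * a l))"
        unfolding t_def by (rule inner_sums) (auto simp: finJ discJ)
      also have "(\<Sum>i\<in>J. \<Sum>l\<in>J. \<delta> i * cnj (\<delta> l) / (1 - cnj (a i) * a l)) = 0"
        by (subst dbl_swap[OF finJ finJ]) (simp add: z)
      finally show ?thesis .
    qed
    have rs: "(\<lambda>m. (norm (t m))^2) sums 0"
    proof -
      have "(\<lambda>m. Re (t m * cnj (t m))) sums Re 0" by (rule sums_Re[OF ts])
      moreover have "Re (t m * cnj (t m)) = (norm (t m))^2" for m
        by (simp add: complex_norm_square[symmetric] del: Re_complex_of_real) (simp)
      ultimately show ?thesis by simp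
    qed
    have t0: "t m = 0" for m
    proof -
      have "suminf (\<lambda>m. (norm (t m))^2) = 0" using sums_unique[OF rs] by simp
      then have "\<forall>m. (norm (t m))^2 = 0"
        using suminf_eq_zero_iff[OF sums_summable[OF rs]] by simp
      then show ?thesis by simp
    qed
    have "\<delta> i = 0"
    proof (rule vandermonde_zero[where x="\<lambda>i. cnj (a i)", OF finJ _ _ i])
      show "inj_on (\<lambda>i. cnj (a i)) J" using dist JS by (auto simp: inj_on_def)
      fix m show "(\<Sum>i\<in>J. \<delta> i * cnj (a i) ^ m) = 0"
        using t0[of m] unfolding t_def taylor_comb[OF finJ] .
    qed
    then show ?thesis unfolding \<delta>_def by simp
  qed
  have main: "orth_proj (model_space a (n-1)) (A (kern a j)) = (\<lambda>z. \<Sum>i\<in>J. \<gamma> i * kern a i z)"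
    unfolding orth_proj_def
  proof (rule the_equality)
    show "(\<lambda>z. \<Sum>i\<in>J. \<gamma> i * kern a i z) \<in> model_space a (n-1) \<and>
      (\<forall>h\<in>model_space a (n-1). h2_inner (\<lambda>z. A (kern a j) z - (\<Sum>i\<in>J. \<gamma> i * kern a i z)) h = 0)"
      using memS orthd orth\<gamma> by blast
  next
    fix g assume g: "g \<in> model_space a (n-1) \<and>
      (\<forall>h\<in>model_space a (n-1). h2_inner (\<lambda>z. A (kern a j) z - g z) h = 0)"
    then obtain d where gd: "g = (\<lambda>z. \<Sum>i\<in>J. d i * kern a i z)" using Sform by blast
    have "\<forall>l\<in>J. Phi (ed d) l = 0" using g orthd[of d] unfolding gd by simp
    then show "g = (\<lambda>z. \<Sum>i\<in>J. \<gamma> i * kern a i z)" unfolding gd using uniq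
      by (auto intro!: sum.cong)
  qed
  then show "orth_proj (model_space a (n-1)) (A (kern a j)) =
           (\<lambda>z. \<Sum>i=1..n-1.
                 (b i j + cnj (blaschke a (n-1) (a n)) * b n j /
                   (cnj (deriv (blaschke a (n-1)) (a i)) * (cnj (a n) - cnj (a i))))
                 * kern a i z)"
    unfolding J_def \<gamma>_def .
qed


end
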